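(* Let $\overline{F}$ be a finite set, let $r=(r(i,j):i,j\in\overline{F})$ be an irreducible stochastic matrix (transition matrix of a homogeneous Markov chain $X$ on $\overline{F}$), and let $\boldsymbol{\alpha}=(\alpha_j:j\in\overline{F})\in[0,1]^{\overline{F}}$ be a non-zero vector of acceptance probabilities. Let $X^{(\boldsymbol{\alpha})}$ be the Markov chain obtained from $X$ by randomized skipping with acceptance probabilities $\boldsymbol{\alpha}$, with transition matrix $r^{(\boldsymbol{\alpha})}$, and let $B(\boldsymbol{\alpha})=\{j\in\overline{F}:\alpha_j=0\}$ (so $B(\boldsymbol{\alpha})\subsetneq\overline{F}$). Then \[ r^{(\boldsymbol{\alpha})}(i,j)=P\big(X^{(A)}(\tau^{(A)})=j\,\big|\,(X^{(A)}_0,Y^{(A)}_0)=(i,0)\big),\qquad i,j\in\overline{F}, \] the chain $X^{(\boldsymbol{\alpha})}$ is irreducible on $\overline{F}\setminus B(\boldsymbol{\alpha})$, and \[ r^{(\boldsymbol{\alpha})}=\sum_{k=0}^{\infty}\big(r I_{(1-\boldsymbol{\alpha})}\big)^{k} r I_{\boldsymbol{\alpha}}=\big(I-rI_{(1-\boldsymbol{\alpha})}\big)^{-1} r I_{\boldsymbol{\alpha}} . \]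
   Context: $I_{\boldsymbol{\alpha}}$ denotes the diagonal matrix indexed by $\overline{F}$ with diagonal entries $\alpha_j$, and $I_{(1-\boldsymbol{\alpha})}$ the diagonal matrix with diagonal entries $1-\alpha_j$; $I$ is the identity matrix. Randomized skipping: a random walker at state $i$ proposes a destination $j$ with probability $r(i,j)$; independently of the past given $j$, a Bernoulli experiment with success probability $\alpha_j$ is performed. On success the jump to $j$ is performed and the walker stays at $j$ for (at least) one time step. On failure the walker performs only an imaginary jump to $j$, spending no time there, and immediately proposes a new destination $l$ with probability $r(j,l)$, which is again accepted with probability $\alpha_l$, and so on, until some proposal is accepted; the accepted state is the next state of $X^{(\boldsymbol{\alpha})}$. The auxiliary chain $(X^{(A)},Y^{(A)})$ is the Markov chain on $\overline{F}\times\{0,1\}$ with transition probabilities $P(X^{(A)}_{n+1}=j,Y^{(A)}_{n+1}=1\mid X^{(A)}_n=i,Y^{(A)}_n=0)=r(i,j)\alpha_j$, $P(X^{(A)}_{n+1}=j,Y^{(A)}_{n+1}=0\mid X^{(A)}_n=i,Y^{(A)}_n=0)=r(i,j)(1-\alpha_j)$, and with all states in $\overline{F}\times\{1\}$ absorbing (transition probability $\delta_{ij}$ from $(i,1)$ to $(j,1)$, and $0$ to $(j,0)$); it is started in $\overline{F}\times\{0\}$. $\tau^{(A)}=\inf\{n\ge 1: Y^{(A)}_n=1\}$ is its absorption time. *)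

theory Defs
  imports Complex_Main
begin

text \<open>Matrices indexed by a finite type 'n (the state space F-bar = UNIV) are
  represented as functions 'n => 'n => real.\<close>

definition mmult :: "('a::finite \<Rightarrow> 'a \<Rightarrow> real) \<Rightarrow> ('a \<Rightarrow> 'a \<Rightarrow> real) \<Rightarrow> 'a \<Rightarrow> 'a \<Rightarrow> real" where
  "mmult A B i j = (\<Sum>l\<in>UNIV. A i l * B l j)"

definition mid :: "'a \<Rightarrow> 'a \<Rightarrow> real" where
  "mid i j = (if i = j then 1 else 0)"

fun mpow :: "('a::finite \<Rightarrow> 'a \<Rightarrow> real) \<Rightarrow> nat \<Rightarrow> 'a \<Rightarrow> 'a \<Rightarrow> real" where
  "mpow A 0 = mid"
| "mpow A (Suc n) = mmult (mpow A n) A"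

definition diagm :: "('a \<Rightarrow> real) \<Rightarrow> 'a \<Rightarrow> 'a \<Rightarrow> real" where
  "diagm d i j = (if i = j then d i else 0)"

definition stochastic :: "('a::finite \<Rightarrow> 'a \<Rightarrow> real) \<Rightarrow> bool" where
  "stochastic P \<longleftrightarrow> (\<forall>i j. 0 \<le> P i j) \<and> (\<forall>i. (\<Sum>j\<in>UNIV. P i j) = 1)"

fun mpow_on :: "'a set \<Rightarrow> ('a \<Rightarrow> 'a \<Rightarrow> real) \<Rightarrow> nat \<Rightarrow> 'a \<Rightarrow> 'a \<Rightarrow> real" where
  "mpow_on S A 0 i j = (if i = j then 1 else 0)"
| "mpow_on S A (Suc n) i j = (\<Sum>l\<in>S. mpow_on S A n i l * A l j)"

definition irreducible_on :: "'a set \<Rightarrow> ('a \<Rightarrow> 'a \<Rightarrow> real) \<Rightarrow> bool" where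
  "irreducible_on S P \<longleftrightarrow> (\<forall>i\<in>S. \<forall>j\<in>S. \<exists>n. mpow_on S P n i j > 0)"

definition irreducible :: "('a::finite \<Rightarrow> 'a \<Rightarrow> real) \<Rightarrow> bool" where
  "irreducible P \<longleftrightarrow> irreducible_on UNIV P"

text \<open>Randomized skipping: skip_within r a n i j is the probability that, starting
  at i, one of the first n proposals is accepted and the accepted state is j.
  First proposal l (prob. r i l): accepted with prob. a l (then result l),
  otherwise an imaginary jump to l and the procedure restarts from l.\<close>
fun skip_within :: "('a::finite \<Rightarrow> 'a \<Rightarrow> real) \<Rightarrow> ('a \<Rightarrow> real) \<Rightarrow> nat \<Rightarrow> 'a \<Rightarrow> 'a \<Rightarrow> real" where
  "skip_within r a 0 i j = 0"
| "skip_within r a (Suc n) i j =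
     r i j * a j + (\<Sum>l\<in>UNIV. r i l * (1 - a l) * skip_within r a n l j)"

definition skip_matrix :: "('a::finite \<Rightarrow> 'a \<Rightarrow> real) \<Rightarrow> ('a \<Rightarrow> real) \<Rightarrow> 'a \<Rightarrow> 'a \<Rightarrow> real" where
  "skip_matrix r a i j = lim (\<lambda>n. skip_within r a n i j)"

text \<open>Auxiliary chain (X^(A),Y^(A)) on F x {0,1}; False encodes 0, True encodes 1.\<close>
definition aux_P :: "('a::finite \<Rightarrow> 'a \<Rightarrow> real) \<Rightarrow> ('a \<Rightarrow> real) \<Rightarrow> ('a \<times> bool) \<Rightarrow> ('a \<times> bool) \<Rightarrow> real" where
  "aux_P r a s t =
     (case (s, t) of
        ((i, False), (j, True)) \<Rightarrow> r i j * a j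
      | ((i, False), (j, False)) \<Rightarrow> r i j * (1 - a j)
      | ((i, True), (j, True)) \<Rightarrow> (if i = j then 1 else 0)
      | ((i, True), (j, False)) \<Rightarrow> 0)"

text \<open>P(X^(A)(tau^(A)) = j | start (i,0)): since F x {1} is absorbing,
  P(tau <= n, X^(A)(tau) = j) is the n-step probability from (i,0) to (j,1);
  the absorption probability is its limit as n tends to infinity.\<close>
definition absorb_prob :: "('a::finite \<Rightarrow> 'a \<Rightarrow> real) \<Rightarrow> ('a \<Rightarrow> real) \<Rightarrow> 'a \<Rightarrow> 'a \<Rightarrow> real" where
  "absorb_prob r a i j = lim (\<lambda>n. mpow (aux_P r a) n (i, False) (j, True))"

end

theory Submission imports Defs begin

lemma mmult_assoc: "mmult (mmult A B) C = mmult A (mmult B C)"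
proof (intro ext)
  fix i j
  have "mmult (mmult A B) C i j = (\<Sum>k\<in>UNIV. \<Sum>l\<in>UNIV. A i l * B l k * C k j)"
    unfolding mmult_def by (simp add: sum_distrib_right)
  also have "\<dots> = (\<Sum>l\<in>UNIV. \<Sum>k\<in>UNIV. A i l * B l k * C k j)" by (rule sum.swap)
  also have "\<dots> = mmult A (mmult B C) i j"
    unfolding mmult_def by (simp add: sum_distrib_left mult.assoc)
  finally show "mmult (mmult A B) C i j = mmult A (mmult B C) i j" .
qed

lemma mmult_mid_left[simp]: "mmult mid A = A"
proof (intro ext)
  fix i j
  have "(\<Sum>l\<in>UNIV. (if i = l then 1 else 0) * A l j) = (\<Sum>l\<in>UNIV. (if i = l then A l j else 0))"
    by (rule sum.cong) auto
  then show "mmult mid A i j = A i j" unfolding mmult_def mid_def by simp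
qed

lemma mmult_mid_right[simp]: "mmult A mid = A"
proof (intro ext)
  fix i j
  have "(\<Sum>l\<in>UNIV. A i l * (if l = j then 1 else 0)) = (\<Sum>l\<in>UNIV. (if l = j then A i l else 0))"
    by (rule sum.cong) auto
  then show "mmult A mid i j = A i j" unfolding mmult_def mid_def by simp
qed

lemma mpow_add: "mpow A (m + n) = mmult (mpow A m) (mpow A n)"
  by (induction n) (auto simp: mmult_assoc)

lemma mpow_Suc_left: "mpow A (Suc n) = mmult A (mpow A n)"
  using mpow_add[of A 1 n] by simp

lemma mmult_diagm: "mmult A (diagm d) i j = A i j * d j"
  unfolding mmult_def diagm_def by (simp add: if_distrib cong: if_cong)

lemma mmult_nonneg: "(\<And>i j. 0 \<le> A i j) \<Longrightarrow> (\<And>i j. 0 \<le> B i j) \<Longrightarrow> 0 \<le> mmult A B i j"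
  unfolding mmult_def by (simp add: sum_nonneg)

lemma mpow_nonneg: "(\<And>i j. 0 \<le> A i j) \<Longrightarrow> 0 \<le> mpow A n i j"
  by (induction n arbitrary: i j) (auto simp: mid_def intro!: mmult_nonneg)

lemma mpow_on_nonneg: "(\<And>i j. 0 \<le> A i j) \<Longrightarrow> 0 \<le> mpow_on S A n i j"
  by (induction n arbitrary: i j) (auto intro!: sum_nonneg)

lemma sum_pos_ex: "0 < sum (f::_\<Rightarrow>real) A \<Longrightarrow> \<exists>a\<in>A. 0 < f a"
proof (rule ccontr)
  assume a: "0 < sum f A" "\<not> (\<exists>a\<in>A. 0 < f a)"
  from a(2) have "sum f A \<le> 0" by (auto intro!: sum_nonpos simp: not_less)
  with a show False by simp
qed

lemma mmult_ge: "(\<And>i j. 0 \<le> A i j) \<Longrightarrow> (\<And>i j. 0 \<le> B i j) \<Longrightarrow> A i l * B l j \<le> mmult A B i j"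
  unfolding mmult_def by (rule member_le_sum) auto


lemma mmult_minus_right: "mmult A (\<lambda>i j. mid i j - B i j) i j = A i j - mmult A B i j"
proof -
  have "mmult A (\<lambda>i j. mid i j - B i j) i j = mmult A mid i j - mmult A B i j"
    unfolding mmult_def by (simp add: right_diff_distrib sum_subtractf)
  then show ?thesis by simp
qed

lemma mmult_minus_left: "mmult (\<lambda>i j. mid i j - B i j) A i j = A i j - mmult B A i j"
proof -
  have "mmult (\<lambda>i j. mid i j - B i j) A i j = mmult mid A i j - mmult B A i j"
    unfolding mmult_def by (simp add: left_diff_distrib sum_subtractf)
  then show ?thesis by simp
qed

locale skipctx =
  fixes r :: "'n::finite \<Rightarrow> 'n \<Rightarrow> real" and \<alpha> :: "'n \<Rightarrow> real"
  assumes stoch: "stochastic r"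
    and irr: "irreducible r"
    and arange: "\<forall>j. 0 \<le> \<alpha> j \<and> \<alpha> j \<le> 1"
    and anz: "\<exists>j. \<alpha> j \<noteq> 0"
begin

abbreviation "Q \<equiv> mmult r (diagm (\<lambda>l. 1 - \<alpha> l))"
abbreviation "R \<equiv> mmult r (diagm \<alpha>)"
abbreviation "Mi \<equiv> (\<lambda>i j. mid i j - mmult r (diagm (\<lambda>l. 1 - \<alpha> l)) i j)"

lemma r_nn: "0 \<le> r i j" using stoch unfolding stochastic_def by blast
lemma rsum: "(\<Sum>j\<in>UNIV. r i j) = 1" using stoch unfolding stochastic_def by blast
lemma a_nn: "0 \<le> \<alpha> j" using arange by blast
lemma a_le1: "\<alpha> j \<le> 1" using arange by blast

lemma Q_eq: "Q i j = r i j * (1 - \<alpha> j)" by (rule mmult_diagm)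
lemma R_eq: "R i j = r i j * \<alpha> j" by (rule mmult_diagm)
lemma Q_nn: "0 \<le> Q i j" unfolding Q_eq using r_nn a_le1 by simp
lemma R_nn: "0 \<le> R i j" unfolding R_eq using r_nn a_nn by simp
lemma Qk_nn: "0 \<le> mpow Q k i j" by (rule mpow_nonneg) (rule Q_nn)
lemma QkR_nn: "0 \<le> mmult (mpow Q k) R i j" by (intro mmult_nonneg Qk_nn R_nn)

lemma skip_eq: "skip_within r \<alpha> n i j = (\<Sum>k<n. mmult (mpow Q k) R i j)"
proof (induction n arbitrary: i)
  case 0
  then show ?case by simp
next
  case (Suc n)
  have "skip_within r \<alpha> (Suc n) i j = r i j * \<alpha> j + (\<Sum>l\<in>UNIV. r i l * (1 - \<alpha> l) * (\<Sum>k<n. mmult (mpow Q k) R l j))"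
    by (simp add: Suc)
  also have "\<dots> = R i j + (\<Sum>l\<in>UNIV. Q i l * (\<Sum>k<n. mmult (mpow Q k) R l j))"
    by (simp only: Q_eq[of i] R_eq[of i j])
  also have "(\<Sum>l\<in>UNIV. Q i l * (\<Sum>k<n. mmult (mpow Q k) R l j))
      = (\<Sum>k<n. \<Sum>l\<in>UNIV. Q i l * mmult (mpow Q k) R l j)"
    unfolding sum_distrib_left by (rule sum.swap)
  also have "\<dots> = (\<Sum>k<n. mmult (mpow Q (Suc k)) R i j)"
  proof (rule sum.cong)
    fix k
    have "mmult (mpow Q (Suc k)) R = mmult Q (mmult (mpow Q k) R)"
      unfolding mpow_Suc_left by (rule mmult_assoc)
    then show "(\<Sum>l\<in>UNIV. Q i l * mmult (mpow Q k) R l j) = mmult (mpow Q (Suc k)) R i j"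
      by (simp add: mmult_def[of Q])
  qed simp
  also have "R i j + (\<Sum>k<n. mmult (mpow Q (Suc k)) R i j) = (\<Sum>k<Suc n. mmult (mpow Q k) R i j)"
    unfolding sum.lessThan_Suc_shift by simp
  finally show ?case .
qed

lemma skip_nn: "0 \<le> skip_within r \<alpha> n i j"
  unfolding skip_eq by (intro sum_nonneg QkR_nn)

lemma skip_bound: "(\<Sum>j\<in>UNIV. skip_within r \<alpha> n i j) \<le> 1"
proof (induction n arbitrary: i)
  case 0
  then show ?case by simp
next
  case (Suc n)
  have "(\<Sum>j\<in>UNIV. skip_within r \<alpha> (Suc n) i j)
     = (\<Sum>j\<in>UNIV. r i j * \<alpha> j) + (\<Sum>l\<in>UNIV. r i l * (1 - \<alpha> l) * (\<Sum>j\<in>UNIV. skip_within r \<alpha> n l j))"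
  proof -
    have "(\<Sum>j\<in>UNIV. skip_within r \<alpha> (Suc n) i j)
      = (\<Sum>j\<in>UNIV. r i j * \<alpha> j) + (\<Sum>j\<in>UNIV. \<Sum>l\<in>UNIV. r i l * (1 - \<alpha> l) * skip_within r \<alpha> n l j)"
      by (simp add: sum.distrib)
    also have "(\<Sum>j\<in>UNIV. \<Sum>l\<in>UNIV. r i l * (1 - \<alpha> l) * skip_within r \<alpha> n l j)
       = (\<Sum>l\<in>UNIV. \<Sum>j\<in>UNIV. r i l * (1 - \<alpha> l) * skip_within r \<alpha> n l j)"
      by (rule sum.swap)
    also have "\<dots> = (\<Sum>l\<in>UNIV. r i l * (1 - \<alpha> l) * (\<Sum>j\<in>UNIV. skip_within r \<alpha> n l j))"
      by (simp add: sum_distrib_left)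
    finally show ?thesis .
  qed
  also have "\<dots> \<le> (\<Sum>j\<in>UNIV. r i j * \<alpha> j) + (\<Sum>l\<in>UNIV. r i l * (1 - \<alpha> l))"
  proof -
    have "(\<Sum>l\<in>UNIV. r i l * (1 - \<alpha> l) * (\<Sum>j\<in>UNIV. skip_within r \<alpha> n l j)) \<le> (\<Sum>l\<in>UNIV. r i l * (1 - \<alpha> l))"
    proof (rule sum_mono)
      fix l
      have "0 \<le> r i l * (1 - \<alpha> l)" using r_nn a_le1 by simp
      then show "r i l * (1 - \<alpha> l) * (\<Sum>j\<in>UNIV. skip_within r \<alpha> n l j) \<le> r i l * (1 - \<alpha> l)"
        using Suc.IH[of l] by (simp add: mult_left_le)
    qed
    then show ?thesis by simp
  qed
  also have "\<dots> = (\<Sum>j\<in>UNIV. r i j)"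
    by (simp add: sum.distrib[symmetric] algebra_simps)
  finally show ?case using rsum by simp
qed

lemma summable_QR: "summable (\<lambda>k. mmult (mpow Q k) R i j)"
proof (rule summableI_nonneg_bounded)
  fix n
  have "skip_within r \<alpha> n i j \<le> (\<Sum>j\<in>UNIV. skip_within r \<alpha> n i j)"
    by (rule member_le_sum) (auto intro: skip_nn)
  then show "(\<Sum>k<n. mmult (mpow Q k) R i j) \<le> 1" using skip_bound[of n i] skip_eq by simp
qed (rule QkR_nn)

lemma P_eq: "skip_matrix r \<alpha> i j = (\<Sum>k. mmult (mpow Q k) R i j)"
proof -
  have "(\<lambda>n. \<Sum>k<n. mmult (mpow Q k) R i j) \<longlonglongrightarrow> (\<Sum>k. mmult (mpow Q k) R i j)"
    by (rule summable_LIMSEQ[OF summable_QR])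
  from limI[OF this] show ?thesis unfolding skip_matrix_def skip_eq .
qed

lemma sums_P: "(\<lambda>k. mmult (mpow Q k) R i j) sums skip_matrix r \<alpha> i j"
  unfolding P_eq by (rule summable_sums[OF summable_QR])

lemma P_nn: "0 \<le> skip_matrix r \<alpha> i j"
  unfolding P_eq by (intro suminf_nonneg summable_QR QkR_nn)

lemma P_ge: "mmult (mpow Q k) R i j \<le> skip_matrix r \<alpha> i j"
  unfolding P_eq using sum_le_suminf[OF summable_QR, of "{k}" i j] QkR_nn by simp


lemma prod_pos:
  fixes a b :: real
  assumes "0 < a * b" "0 \<le> a" "0 \<le> b" shows "0 < a" "0 < b"
  using assms by (auto simp: zero_less_mult_iff)

lemma irr': "\<exists>n. 0 < mpow_on UNIV r n i j"
  using irr unfolding irreducible_def irreducible_on_def by blast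

lemma mpow_on_Suc_pos:
  assumes "0 < mpow_on UNIV r (Suc n) x y"
  obtains w where "0 < mpow_on UNIV r n x w" "0 < r w y"
proof -
  from assms obtain w where w: "0 < mpow_on UNIV r n x w * r w y"
    by (auto dest: sum_pos_ex)
  have "0 \<le> mpow_on UNIV r n x w" by (rule mpow_on_nonneg) (rule r_nn)
  with w r_nn show ?thesis using that prod_pos by blast
qed

lemma exists_pos: "\<exists>m j. 0 < mmult (mpow Q m) R l j"
proof (rule ccontr)
  assume H: "\<not> ?thesis"
  define Z where "Z = {l. \<forall>m j. mmult (mpow Q m) R l j = 0}"
  have lZ: "l \<in> Z" unfolding Z_def
  proof (intro CollectI allI)
    fix m j
    from H have "\<not> 0 < mmult (mpow Q m) R l j" by blast
    then show "mmult (mpow Q m) R l j = 0" using QkR_nn[of m l j] by linarith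
  qed
  have closed: "y \<in> Z \<and> \<alpha> y = 0" if x: "x \<in> Z" and rxy: "0 < r x y" for x y
  proof -
    have "mmult (mpow Q 0) R x y = 0" using x unfolding Z_def by blast
    hence "r x y * \<alpha> y = 0" by (simp add: R_eq)
    hence a0: "\<alpha> y = 0" using rxy by simp
    have "y \<in> Z" unfolding Z_def
    proof (intro CollectI allI)
      fix m j
      have "Q x y * mmult (mpow Q m) R y j \<le> mmult Q (mmult (mpow Q m) R) x j"
        by (rule mmult_ge) (auto intro: Q_nn QkR_nn)
      also have "\<dots> = mmult (mpow Q (Suc m)) R x j"
        unfolding mpow_Suc_left mmult_assoc ..
      also have "\<dots> = 0" using x unfolding Z_def by blast
      finally have le: "Q x y * mmult (mpow Q m) R y j \<le> 0" .
      have "Q x y = r x y" using a0 by (simp add: Q_eq)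
      with le rxy have "mmult (mpow Q m) R y j \<le> 0" by (simp add: mult_le_0_iff)
      then show "mmult (mpow Q m) R y j = 0" using QkR_nn[of m y j] by linarith
    qed
    with a0 show ?thesis by blast
  qed
  have reach: "y \<in> Z \<and> (0 < n \<longrightarrow> \<alpha> y = 0)" if "x \<in> Z" "0 < mpow_on UNIV r n x y" for n x y
    using that
  proof (induction n arbitrary: y)
    case 0
    then show ?case by (simp split: if_splits)
  next
    case (Suc n)
    from Suc.prems(2) obtain w where "0 < mpow_on UNIV r n x w" "0 < r w y"
      by (rule mpow_on_Suc_pos)
    then show ?case using Suc.IH Suc.prems(1) closed by blast
  qed
  obtain j0 where j0: "\<alpha> j0 \<noteq> 0" using anz by blast
  obtain n where "0 < mpow_on UNIV r n l j0" using irr' by blast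
  hence j0Z: "j0 \<in> Z" using reach lZ by blast
  have "0 < (\<Sum>j\<in>UNIV. r j0 j)" using rsum by simp
  then obtain l' where l': "0 < r j0 l'" using sum_pos_ex by blast
  hence l'Z: "l' \<in> Z" using closed j0Z by blast
  obtain n' where n': "0 < mpow_on UNIV r n' l' j0" using irr' by blast
  show False
  proof (cases n')
    case 0
    then have "l' = j0" using n' by (simp split: if_splits)
    then have "\<alpha> j0 = 0" using closed[OF j0Z l'] by simp
    with j0 show False by simp
  next
    case (Suc k)
    then have "\<alpha> j0 = 0" using reach[OF l'Z n'] by simp
    with j0 show False by simp
  qed
qed

lemma summable_Q: "summable (\<lambda>k. mpow Q k i l)"
proof -
  obtain m j where c: "0 < mmult (mpow Q m) R l j" using exists_pos by blast
  have "summable (\<lambda>k. mmult (mpow Q (k + m)) R i j)"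
    using summable_ignore_initial_segment[OF summable_QR[of i j], of m] by simp
  then have "summable (\<lambda>k. mmult (mpow Q (k + m)) R i j / mmult (mpow Q m) R l j)"
    by (rule summable_divide)
  then show ?thesis
  proof (rule summable_comparison_test')
    fix k :: nat
    have "mpow Q k i l * mmult (mpow Q m) R l j \<le> mmult (mpow Q k) (mmult (mpow Q m) R) i j"
      by (rule mmult_ge) (auto intro: Qk_nn QkR_nn)
    also have "\<dots> = mmult (mpow Q (k + m)) R i j"
      by (simp only: mpow_add mmult_assoc)
    finally show "norm (mpow Q k i l) \<le> mmult (mpow Q (k + m)) R i j / mmult (mpow Q m) R l j"
      using c Qk_nn[of k i l] by (simp add: pos_le_divide_eq)
  qed
qed

definition N0 :: "'n \<Rightarrow> 'n \<Rightarrow> real" where "N0 i j = (\<Sum>k. mpow Q k i j)"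

lemma Qk_lim: "(\<lambda>k. mpow Q k i j) \<longlonglongrightarrow> 0"
  by (rule summable_LIMSEQ_zero[OF summable_Q])

lemma inv_left: "mmult N0 Mi = mid"
proof (intro ext)
  fix i j
  have "(\<lambda>k. \<Sum>l\<in>UNIV. mpow Q k i l * Mi l j) sums (\<Sum>l\<in>UNIV. N0 i l * Mi l j)"
    unfolding N0_def by (intro sums_sum sums_mult2 summable_sums summable_Q)
  moreover have "(\<lambda>k. \<Sum>l\<in>UNIV. mpow Q k i l * Mi l j) = (\<lambda>k. mpow Q k i j - mpow Q (Suc k) i j)"
  proof
    fix k
    show "(\<Sum>l\<in>UNIV. mpow Q k i l * Mi l j) = mpow Q k i j - mpow Q (Suc k) i j"
      using mmult_minus_right[of "mpow Q k" Q i j] by (simp add: mmult_def[of "mpow Q k"])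
  qed
  moreover have "(\<lambda>k. mpow Q k i j - mpow Q (Suc k) i j) sums (mpow Q 0 i j - 0)"
    by (rule telescope_sums'[OF Qk_lim])
  ultimately have "(\<Sum>l\<in>UNIV. N0 i l * Mi l j) = mpow Q 0 i j"
    using sums_unique2 by force
  then show "mmult N0 Mi i j = mid i j" by (simp add: mmult_def[of N0])
qed

lemma inv_right: "mmult Mi N0 = mid"
proof (intro ext)
  fix i j
  have "(\<lambda>k. \<Sum>l\<in>UNIV. Mi i l * mpow Q k l j) sums (\<Sum>l\<in>UNIV. Mi i l * N0 l j)"
    unfolding N0_def by (intro sums_sum sums_mult summable_sums summable_Q)
  moreover have "(\<lambda>k. \<Sum>l\<in>UNIV. Mi i l * mpow Q k l j) = (\<lambda>k. mpow Q k i j - mpow Q (Suc k) i j)"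
  proof
    fix k
    show "(\<Sum>l\<in>UNIV. Mi i l * mpow Q k l j) = mpow Q k i j - mpow Q (Suc k) i j"
    proof -
      have e: "mpow Q (Suc k) i j = mmult Q (mpow Q k) i j" by (simp only: mpow_Suc_left)
      show ?thesis using mmult_minus_left[of Q "mpow Q k" i j] unfolding e
        by (simp add: mmult_def[of "\<lambda>i j. mid i j - Q i j"])
    qed
  qed
  moreover have "(\<lambda>k. mpow Q k i j - mpow Q (Suc k) i j) sums (mpow Q 0 i j - 0)"
    by (rule telescope_sums'[OF Qk_lim])
  ultimately have "(\<Sum>l\<in>UNIV. Mi i l * N0 l j) = mpow Q 0 i j"
    using sums_unique2 by force
  then show "mmult Mi N0 i j = mid i j" by (simp add: mmult_def[of "\<lambda>i j. mid i j - Q i j"])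
qed

lemma P_N0: "skip_matrix r \<alpha> = mmult N0 R"
proof (intro ext)
  fix i j
  have "(\<lambda>k. \<Sum>l\<in>UNIV. mpow Q k i l * R l j) sums (\<Sum>l\<in>UNIV. N0 i l * R l j)"
    unfolding N0_def by (intro sums_sum sums_mult2 summable_sums summable_Q)
  then have "(\<lambda>k. mmult (mpow Q k) R i j) sums mmult N0 R i j"
    by (simp add: mmult_def[of "mpow Q _"] mmult_def[of N0])
  with sums_P show "skip_matrix r \<alpha> i j = mmult N0 R i j" using sums_unique2 by blast
qed

lemma inv_unique: "mmult N Mi = mid \<Longrightarrow> N = N0"
proof -
  assume h: "mmult N Mi = mid"
  have "N = mmult N (mmult Mi N0)" by (simp add: inv_right)
  also have "\<dots> = mmult (mmult N Mi) N0" by (rule mmult_assoc[symmetric])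
  also have "\<dots> = N0" by (simp add: h)
  finally show ?thesis .
qed


abbreviation "S \<equiv> UNIV - {j. \<alpha> j = 0}"

lemma reach_inv:
  assumes "x \<in> S" "0 < mpow_on UNIV r n x y"
  shows "\<exists>z\<in>S. (\<exists>m. 0 < mpow_on S (skip_matrix r \<alpha>) m x z) \<and> (\<exists>k. 0 < mpow Q k z y) \<and> (y \<in> S \<longrightarrow> z = y)"
  using assms(2)
proof (induction n arbitrary: y)
  case 0
  then have "y = x" by (simp split: if_splits)
  then show ?case using assms(1)
    by (intro bexI[of _ x]) (auto intro!: exI[of _ 0] simp: mid_def)
next
  case (Suc n)
  from Suc.prems obtain w where w1: "0 < mpow_on UNIV r n x w" and w2: "0 < r w y"
    by (rule mpow_on_Suc_pos)
  from Suc.IH[OF w1] obtain z m k where z: "z \<in> S" and m: "0 < mpow_on S (skip_matrix r \<alpha>) m x z"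
    and k: "0 < mpow Q k z w" by blast
  show ?case
  proof (cases "y \<in> S")
    case True
    then have ay: "0 < \<alpha> y" using a_nn[of y] by auto
    have "mpow Q k z w * R w y \<le> mmult (mpow Q k) R z y"
      by (rule mmult_ge) (auto intro: Qk_nn R_nn)
    moreover have "0 < mpow Q k z w * R w y" using k w2 ay by (simp add: R_eq)
    ultimately have "0 < skip_matrix r \<alpha> z y" using P_ge[of k z y] by linarith
    then have "0 < mpow_on S (skip_matrix r \<alpha>) m x z * skip_matrix r \<alpha> z y" using m by simp
    also have "\<dots> \<le> mpow_on S (skip_matrix r \<alpha>) (Suc m) x y"
      using z by (simp, intro member_le_sum) (auto intro!: mult_nonneg_nonneg mpow_on_nonneg P_nn)
    finally have "0 < mpow_on S (skip_matrix r \<alpha>) (Suc m) x y" .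
    moreover have "0 < mpow Q 0 y y" by (simp add: mid_def)
    ultimately show ?thesis using True by blast
  next
    case False
    then have ay: "\<alpha> y = 0" by simp
    have "mpow Q k z w * Q w y \<le> mmult (mpow Q k) Q z y"
      by (rule mmult_ge) (auto intro: Qk_nn Q_nn)
    moreover have "0 < mpow Q k z w * Q w y" using k w2 ay by (simp add: Q_eq)
    ultimately have "0 < mpow Q (Suc k) z y" by simp
    then show ?thesis using False z m by blast
  qed
qed

lemma irr_skip: "irreducible_on S (skip_matrix r \<alpha>)"
  unfolding irreducible_on_def
proof (intro ballI)
  fix i j assume i: "i \<in> S" and j: "j \<in> S"
  obtain n where "0 < mpow_on UNIV r n i j" using irr' by blast
  from reach_inv[OF i this] j show "\<exists>n. 0 < mpow_on S (skip_matrix r \<alpha>) n i j" by blast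
qed

lemma aux_true: "mpow (aux_P r \<alpha>) n (l, True) t = (if t = (l, True) then 1 else 0)"
proof (induction n arbitrary: t)
  case 0
  then show ?case by (auto simp: mid_def)
next
  case (Suc n)
  have "mpow (aux_P r \<alpha>) (Suc n) (l, True) t = (\<Sum>s\<in>UNIV. (if s = (l, True) then aux_P r \<alpha> s t else 0))"
    unfolding mpow.simps mmult_def Suc.IH by (intro sum.cong) auto
  also have "\<dots> = aux_P r \<alpha> (l, True) t" by simp
  also have "\<dots> = (if t = (l, True) then 1 else 0)"
    by (cases t) (auto simp: aux_P_def split: bool.splits)
  finally show ?case .
qed

lemma sum_prod_bool: "(\<Sum>s\<in>UNIV. f s) = (\<Sum>l\<in>UNIV. f (l, False) + f (l, True))"
  for f :: "'n \<times> bool \<Rightarrow> real"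
proof -
  have "(\<Sum>s\<in>UNIV. f s) = (\<Sum>s\<in>UNIV \<times> UNIV. f s)" by simp
  also have "\<dots> = (\<Sum>l\<in>UNIV. \<Sum>b\<in>UNIV. f (l, b))" by (simp add: sum.cartesian_product)
  also have "\<dots> = (\<Sum>l\<in>UNIV. f (l, False) + f (l, True))" by (simp add: UNIV_bool add.commute)
  finally show ?thesis .
qed

lemma aux_false: "mpow (aux_P r \<alpha>) n (i, False) (j, True) = skip_within r \<alpha> n i j"
proof (induction n arbitrary: i)
  case 0
  then show ?case by (simp add: mid_def)
next
  case (Suc n)
  have "mpow (aux_P r \<alpha>) (Suc n) (i, False) (j, True)
      = (\<Sum>s\<in>UNIV. aux_P r \<alpha> (i, False) s * mpow (aux_P r \<alpha>) n s (j, True))"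
    by (simp only: mpow_Suc_left mmult_def)
  also have "\<dots> = (\<Sum>l\<in>UNIV. r i l * (1 - \<alpha> l) * skip_within r \<alpha> n l j
                 + (if l = j then r i j * \<alpha> j else 0))"
    unfolding sum_prod_bool
  proof (rule sum.cong)
    fix l
    have e1: "aux_P r \<alpha> (i, False) (l, False) = r i l * (1 - \<alpha> l)" by (simp add: aux_P_def)
    have e2: "aux_P r \<alpha> (i, False) (l, True) = r i l * \<alpha> l" by (simp add: aux_P_def)
    have e3: "mpow (aux_P r \<alpha>) n (l, True) (j, True) = (if l = j then 1 else 0)"
      by (simp only: aux_true) auto
    show "aux_P r \<alpha> (i, False) (l, False) * mpow (aux_P r \<alpha>) n (l, False) (j, True) +
        aux_P r \<alpha> (i, False) (l, True) * mpow (aux_P r \<alpha>) n (l, True) (j, True) =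
        r i l * (1 - \<alpha> l) * skip_within r \<alpha> n l j + (if l = j then r i j * \<alpha> j else 0)"
      unfolding e1 e2 e3 Suc.IH by simp
  qed simp
  also have "\<dots> = skip_within r \<alpha> (Suc n) i j"
    by (simp add: sum.distrib)
  finally show ?case .
qed

lemma absorb_eq: "absorb_prob r \<alpha> i j = skip_matrix r \<alpha> i j"
  unfolding absorb_prob_def skip_matrix_def aux_false ..

end

theorem theorem2p2:
  fixes r :: "'n::finite \<Rightarrow> 'n \<Rightarrow> real" and \<alpha> :: "'n \<Rightarrow> real"
  assumes stoch: "stochastic r"
    and irr: "irreducible r"
    and alpha_range: "\<forall>j. 0 \<le> \<alpha> j \<and> \<alpha> j \<le> 1"
    and alpha_nonzero: "\<exists>j. \<alpha> j \<noteq> 0"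
  shows "(\<forall>i j. skip_matrix r \<alpha> i j = absorb_prob r \<alpha> i j)
    \<and> irreducible_on (UNIV - {j. \<alpha> j = 0}) (skip_matrix r \<alpha>)
    \<and> (\<forall>i j. (\<lambda>k. mmult (mpow (mmult r (diagm (\<lambda>l. 1 - \<alpha> l))) k) (mmult r (diagm \<alpha>)) i j)
              sums skip_matrix r \<alpha> i j)
    \<and> (\<exists>N. mmult N (\<lambda>i j. mid i j - mmult r (diagm (\<lambda>l. 1 - \<alpha> l)) i j) = mid
           \<and> mmult (\<lambda>i j. mid i j - mmult r (diagm (\<lambda>l. 1 - \<alpha> l)) i j) N = mid)
    \<and> (\<forall>N. mmult N (\<lambda>i j. mid i j - mmult r (diagm (\<lambda>l. 1 - \<alpha> l)) i j) = mid
           \<and> mmult (\<lambda>i j. mid i j - mmult r (diagm (\<lambda>l. 1 - \<alpha> l)) i j) N = mid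
           \<longrightarrow> skip_matrix r \<alpha> = mmult N (mmult r (diagm \<alpha>)))"
proof -
  interpret skipctx r \<alpha> using assms by unfold_locales
  show ?thesis
  proof (intro conjI allI impI)
    fix i j show "skip_matrix r \<alpha> i j = absorb_prob r \<alpha> i j" by (simp add: absorb_eq)
  next
    show "irreducible_on (UNIV - {j. \<alpha> j = 0}) (skip_matrix r \<alpha>)" by (rule irr_skip)
  next
    fix i j show "(\<lambda>k. mmult (mpow Q k) R i j) sums skip_matrix r \<alpha> i j" by (rule sums_P)
  next
    show "\<exists>N. mmult N Mi = mid \<and> mmult Mi N = mid" using inv_left inv_right by blast
  next
    fix N assume "mmult N Mi = mid \<and> mmult Mi N = mid"
    then have "N = N0" using inv_unique by blast
    then show "skip_matrix r \<alpha> = mmult N R" by (simp add: P_N0)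
  qed
qed

end
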